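(* There is a subexponential-time non-adaptive tester for submodularity of functions $f:\{0,1\}^n\to\mathbb{R}$: the procedure samples $1/\epsilon^{O(\sqrt{n}\log n)}$ squares uniformly at random and answers NO if and only if some sampled square is violated. It always answers YES on submodular functions, and if the input $f$ is $\epsilon$-far from being submodular, it answers NO with probability greater than $2/3$.
   Context: Let $\mathbf{e}_i \in \{0,1\}^n$ be the $i$-th standard basis vector. For $f:\{0,1\}^n\to\mathbb{R}$, $i\in[n]$ and $x$ with $x_i=0$, let $\partial_i f(x) = f(x+\mathbf{e}_i)-f(x)$. $f$ is submodular if $\partial_i f(x) \ge \partial_i f(y)$ for all $i$ and all $x \le y$ (coordinatewise) with $x_i=y_i=0$. $f$ is $\epsilon$-far from being submodular if every submodular $g$ differs from $f$ on more than an $\epsilon$ fraction of the points of $\{0,1\}^n$. A square is a set $\{x, x+\mathbf{e}_i, x+\mathbf{e}_j, x+\mathbf{e}_i+\mathbf{e}_j\}$ with $i\neq j$, $x_i=x_j=0$; a uniformly random square is obtained by sampling $x$ uniformly from $\{0,1\}^n$ and $i,j$ uniformly among the coordinates where $x$ is $0$. It is violated if $f(x)+f(x+\mathbf{e}_i+\mathbf{e}_j) > f(x+\mathbf{e}_i)+f(x+\mathbf{e}_j)$. A tester is non-adaptive if its queries do not depend on previously observed function values. *)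

theory Defs
  imports "HOL-Probability.Probability"
begin

text \<open>Points of the cube {0,1}^n are represented as subsets of {..<n}
  (coordinate i is 1 iff i is in the set); the coordinatewise order is inclusion.
  A function f on the cube is a function nat set => real, of which only the
  values on Pow {..<n} matter.\<close>

definition submodular :: "nat \<Rightarrow> (nat set \<Rightarrow> real) \<Rightarrow> bool" where
  "submodular n f \<longleftrightarrow>
     (\<forall>i x y. i < n \<longrightarrow> x \<subseteq> y \<longrightarrow> y \<subseteq> {..<n} \<longrightarrow> i \<notin> y \<longrightarrow>
        f (insert i x) - f x \<ge> f (insert i y) - f y)"

definition eps_far_submodular :: "nat \<Rightarrow> real \<Rightarrow> (nat set \<Rightarrow> real) \<Rightarrow> bool" where
  "eps_far_submodular n \<epsilon> f \<longleftrightarrow>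
     (\<forall>g. submodular n g \<longrightarrow>
        real (card {x \<in> Pow {..<n}. f x \<noteq> g x}) > \<epsilon> * 2 ^ n)"

text \<open>A square is given by (x, i, j) with i \<noteq> j both zero coordinates of x.\<close>

definition random_square :: "nat \<Rightarrow> (nat set \<times> nat \<times> nat) option pmf" where
  "random_square n =
     bind_pmf (pmf_of_set (Pow {..<n})) (\<lambda>x.
       if card ({..<n} - x) \<ge> 2 then
         map_pmf (\<lambda>(i, j). Some (x, i, j))
           (pmf_of_set {(i, j). i \<in> {..<n} - x \<and> j \<in> {..<n} - x \<and> i \<noteq> j})
       else return_pmf None)"

fun square_violated :: "(nat set \<Rightarrow> real) \<Rightarrow> (nat set \<times> nat \<times> nat) option \<Rightarrow> bool" where
  "square_violated f None = False"
| "square_violated f (Some (x, i, j)) =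
     (f x + f (insert i (insert j x)) > f (insert i x) + f (insert j x))"

definition tester_rejects_prob :: "nat \<Rightarrow> nat \<Rightarrow> (nat set \<Rightarrow> real) \<Rightarrow> real" where
  "tester_rejects_prob n m f =
     measure_pmf.prob (Pi_pmf {..<m} None (\<lambda>_. random_square n))
       {s. \<exists>k<m. square_violated f (s k)}"

end

theory Submission
  imports Defs
begin


lemma local_global:
  assumes sq: "\<And>x i j. x \<subseteq> {..<n} \<Longrightarrow> i < n \<Longrightarrow> j < n \<Longrightarrow> i \<notin> x \<Longrightarrow> j \<notin> x \<Longrightarrow> i \<noteq> j \<Longrightarrow>
     g x + g (insert i (insert j x)) \<le> g (insert i x) + g (insert j x)"
  shows "submodular n g"
  unfolding submodular_def
proof (intro allI impI)
  fix i x y assume i: "i < n" and xy: "x \<subseteq> y" and y: "y \<subseteq> {..<n}" and iy: "i \<notin> y"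
  have fin: "finite (y - x)" using y finite_subset by blast
  have main: "\<forall>y'. y' = x \<union> D \<longrightarrow> D \<subseteq> y - x \<longrightarrow> g (insert i y') - g y' \<le> g (insert i x) - g x"
    if "finite D" for D
    using that
  proof (induction D rule: finite_induct)
    case empty then show ?case by simp
  next
    case (insert j D)
    show ?case
    proof (intro allI impI)
      fix y' assume y': "y' = x \<union> insert j D" and sub: "insert j D \<subseteq> y - x"
      let ?z = "x \<union> D"
      have ih: "g (insert i ?z) - g ?z \<le> g (insert i x) - g x" using insert.IH sub by auto
      have "?z \<subseteq> {..<n}" using sub y xy by auto
      moreover have "j < n" "j \<notin> ?z" "i \<notin> ?z" "i \<noteq> j" using sub y iy xy insert.hyps by auto
      ultimately have "g ?z + g (insert i (insert j ?z)) \<le> g (insert i ?z) + g (insert j ?z)"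
        using sq i by blast
      moreover have "y' = insert j ?z" using y' by auto
      ultimately show "g (insert i y') - g y' \<le> g (insert i x) - g x" using ih
        by (simp add: insert_commute)
    qed
  qed
  have "y = x \<union> (y - x)" using xy by auto
  then have "g (insert i y) - g y \<le> g (insert i x) - g x" using main[OF fin] by blast
  then show "g (insert i y) - g y \<le> g (insert i x) - g x" .
qed

primrec GG :: "nat \<Rightarrow> (nat set \<Rightarrow> real) \<Rightarrow> real \<Rightarrow> nat \<Rightarrow> nat set \<Rightarrow> real" where
  "GG a f M 0 z = (if card z < a then - M * (real (a - card z))^2 else f z)"
| "GG a f M (Suc k) z = (if card z = a + 2 + k then
      min (f z) (Min ((\<lambda>(i,j). GG a f M k (z - {i}) + GG a f M k (z - {j}) - GG a f M k (z - {i,j}))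
         ` {(i,j). i \<in> z \<and> j \<in> z \<and> i \<noteq> j}))
    else GG a f M k z)"

lemma GG_stab: "card z < a + 2 + k \<Longrightarrow> GG a f M (k + d) z = GG a f M k z"
  by (induction d) auto

lemma GG_stab': assumes "card z < a + 2 + k" shows "GG a f M k z = GG a f M (card z - (a+1)) z"
proof -
  have "k = (card z - (a+1)) + (k - (card z - (a+1)))" using assms by linarith
  moreover have "card z < a + 2 + (card z - (a+1))" by linarith
  ultimately show ?thesis by (metis GG_stab)
qed

definition gg :: "nat \<Rightarrow> (nat set \<Rightarrow> real) \<Rightarrow> real \<Rightarrow> nat set \<Rightarrow> real" where
  "gg a f M z = GG a f M (card z - (a+1)) z"

lemma gg_low: "card z < a \<Longrightarrow> gg a f M z = - M * (real (a - card z))^2"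
  unfolding gg_def by (subgoal_tac "card z - (a+1) = 0") auto

lemma gg_mid: "a \<le> card z \<Longrightarrow> card z \<le> a + 1 \<Longrightarrow> gg a f M z = f z"
  unfolding gg_def by (subgoal_tac "card z - (a+1) = 0") auto

definition pairs :: "nat set \<Rightarrow> (nat \<times> nat) set" where
  "pairs z = {(i,j). i \<in> z \<and> j \<in> z \<and> i \<noteq> j}"

lemma finite_pairs: "finite z \<Longrightarrow> finite (pairs z)"
  unfolding pairs_def by (rule finite_subset[of _ "z \<times> z"]) auto

lemma gg_high:
  assumes "a + 2 \<le> card z"
  shows "gg a f M z = min (f z) (Min ((\<lambda>(i,j). gg a f M (z - {i}) + gg a f M (z - {j}) - gg a f M (z - {i,j})) ` pairs z))"
proof -
  define k where "k = card z - (a+2)"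
  have ck: "card z = a + 2 + k" using assms k_def by simp
  have fin: "finite z" using assms card.infinite by fastforce
  have e: "card z - (a+1) = Suc k" using ck by simp
  have cong: "GG a f M k (z - {i}) + GG a f M k (z - {j}) - GG a f M k (z - {i,j})
      = gg a f M (z - {i}) + gg a f M (z - {j}) - gg a f M (z - {i,j})" if "(i,j) \<in> pairs z" for i j
  proof -
    have "i \<in> z" "j \<in> z" "i \<noteq> j" using that by (auto simp: pairs_def)
    then have c1: "card (z - {i}) < a + 2 + k" "card (z - {j}) < a + 2 + k" "card (z - {i,j}) < a + 2 + k"
      using fin ck by (auto simp: card_Diff_subset)
    show ?thesis unfolding gg_def using GG_stab'[OF c1(1)] GG_stab'[OF c1(2)] GG_stab'[OF c1(3)] by simp
  qed
  have "gg a f M z = GG a f M (Suc k) z" unfolding gg_def e ..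
  also have "\<dots> = min (f z) (Min ((\<lambda>(i,j). GG a f M k (z - {i}) + GG a f M k (z - {j}) - GG a f M k (z - {i,j})) ` pairs z))"
    using ck by (simp add: pairs_def)
  also have "((\<lambda>(i,j). GG a f M k (z - {i}) + GG a f M k (z - {j}) - GG a f M k (z - {i,j})) ` pairs z)
      = ((\<lambda>(i,j). gg a f M (z - {i}) + gg a f M (z - {j}) - gg a f M (z - {i,j})) ` pairs z)"
    by (rule image_cong) (auto simp: cong)
  finally show ?thesis .
qed


lemma gg_low': "card z < a \<Longrightarrow> gg a f M z = - M * (real a - real (card z))^2"
  using gg_low[of z a f M] by (simp add: of_nat_diff)

lemma gg_le_f: "a \<le> card z \<Longrightarrow> gg a f M z \<le> f z"
proof (cases "card z \<le> a + 1")
  case True assume "a \<le> card z" then show ?thesis using gg_mid[OF _ True] by simp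
next
  case False then show ?thesis using gg_high[of a z f M] by simp
qed

lemma card_pairs_ne: assumes "2 \<le> card z" shows "pairs z \<noteq> {}"
proof -
  have "z \<noteq> {}" using assms by auto
  then obtain i where i: "i \<in> z" by auto
  have "card (z - {i}) \<ge> 1" using assms i by (simp add: card_Diff_singleton)
  then obtain j where "j \<in> z - {i}" by (metis card.empty ex_in_conv not_one_le_zero)
  then show ?thesis using i unfolding pairs_def by auto
qed

lemma gg_square_high:
  assumes "finite x" "a \<le> card x" "i \<notin> x" "j \<notin> x" "i \<noteq> j"
  shows "gg a f M x + gg a f M (insert i (insert j x)) \<le> gg a f M (insert i x) + gg a f M (insert j x)"
proof -
  let ?z = "insert i (insert j x)"
  have cz: "card ?z = card x + 2" using assms by simp
  have fz: "finite ?z" using assms by simp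
  have mem: "(i,j) \<in> pairs ?z" unfolding pairs_def using assms by auto
  have e1: "?z - {i} = insert j x" "?z - {j} = insert i x" "?z - {i,j} = x" using assms by auto
  have "gg a f M ?z \<le> Min ((\<lambda>(i,j). gg a f M (?z - {i}) + gg a f M (?z - {j}) - gg a f M (?z - {i,j})) ` pairs ?z)"
    using gg_high[of a ?z f M] cz assms by simp
  also have "\<dots> \<le> gg a f M (?z - {i}) + gg a f M (?z - {j}) - gg a f M (?z - {i,j})"
    by (rule Min_le) (use mem finite_pairs[OF fz] in force)+
  finally show ?thesis using e1 by simp
qed

lemma gg_square:
  fixes f :: "nat set \<Rightarrow> real"
  assumes B: "\<And>z. z \<subseteq> {..<n} \<Longrightarrow> \<bar>f z\<bar> \<le> B" and M: "M \<ge> 3 * B"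
  assumes x: "x \<subseteq> {..<n}" "i < n" "j < n" "i \<notin> x" "j \<notin> x" "i \<noteq> j"
  shows "gg a f M x + gg a f M (insert i (insert j x)) \<le> gg a f M (insert i x) + gg a f M (insert j x)"
proof -
  have fx: "finite x" using x finite_subset by blast
  let ?z = "insert i (insert j x)"
  have cz: "card ?z = card x + 2" "card (insert i x) = card x + 1" "card (insert j x) = card x + 1"
    using x fx by auto
  have sub: "?z \<subseteq> {..<n}" "insert i x \<subseteq> {..<n}" "insert j x \<subseteq> {..<n}" using x by auto
  have B0: "B \<ge> 0" using B[OF x(1)] by linarith
  consider "a \<le> card x" | "card x + 1 = a" | "card x + 2 = a" | "card x + 3 \<le> a" by linarith
  then show ?thesis
  proof cases
    case 1 then show ?thesis using gg_square_high x fx by blast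
  next
    case 2
    have e: "real a - real (card x) = 1" using 2 by linarith
    have "gg a f M x = - M * (real a - real (card x))^2" using gg_low'[of x a f M] 2 by simp
    then have "gg a f M x = - M" unfolding e by simp
    moreover have "gg a f M ?z = f ?z" "gg a f M (insert i x) = f (insert i x)" "gg a f M (insert j x) = f (insert j x)"
      using gg_mid cz 2 by auto
    moreover have "\<bar>f ?z\<bar> \<le> B" "\<bar>f (insert i x)\<bar> \<le> B" "\<bar>f (insert j x)\<bar> \<le> B" using B sub by auto
    ultimately show ?thesis using M by linarith
  next
    case 3
    have e: "real a - real (card x) = 2" "real a - real (card (insert i x)) = 1" "real a - real (card (insert j x)) = 1"
      using 3 cz by auto
    have "gg a f M x = - M * (real a - real (card x))^2" using gg_low'[of x a f M] 3 by simp
    then have "gg a f M x = - 4 * M" unfolding e by simp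
    moreover have "gg a f M ?z = f ?z" using gg_mid cz 3 by auto
    moreover have "gg a f M (insert i x) = - M * (real a - real (card (insert i x)))^2"
       "gg a f M (insert j x) = - M * (real a - real (card (insert j x)))^2"
      using gg_low'[of "insert i x" a f M] gg_low'[of "insert j x" a f M] cz 3 by auto
    then have "gg a f M (insert i x) = - M" "gg a f M (insert j x) = - M" unfolding e by auto
    moreover have "\<bar>f ?z\<bar> \<le> B" using B sub by auto
    ultimately show ?thesis using M B0 by linarith
  next
    case 4
    define k where "k = real a - real (card x)"
    have k3: "k \<ge> 3" using 4 k_def by simp
    have "gg a f M x = - M * k^2" using gg_low'[of x a f M] 4 k_def by simp
    moreover have "gg a f M ?z = - M * (k-2)^2"
      using gg_low'[of ?z a f M] cz 4 k_def by (simp add: algebra_simps)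
    moreover have "gg a f M (insert i x) = - M * (k-1)^2" "gg a f M (insert j x) = - M * (k-1)^2"
      using gg_low'[of "insert i x" a f M] gg_low'[of "insert j x" a f M] cz 4 k_def by (auto simp: algebra_simps)
    moreover have "- M * k^2 + - M * (k-2)^2 \<le> - M * (k-1)^2 + - M * (k-1)^2"
    proof -
      have "- M * k^2 + - M * (k-2)^2 = - M * (k-1)^2 + - M * (k-1)^2 - 2 * M"
        by (simp add: power2_eq_square algebra_simps)
      then show ?thesis using M B0 by linarith
    qed
    ultimately show ?thesis by simp
  qed
qed

definition Vset :: "nat \<Rightarrow> (nat set \<Rightarrow> real) \<Rightarrow> nat \<Rightarrow> (nat set \<times> nat \<times> nat) set" where
  "Vset n f a = {(x,(i,j)). x \<subseteq> {..<n} \<and> a \<le> card x \<and> i < n \<and> j < n \<and> i \<notin> x \<and> j \<notin> x \<and> i \<noteq> j \<and>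
     f x + f (insert i (insert j x)) > f (insert i x) + f (insert j x)}"

lemma gg_changed:
  assumes "z \<subseteq> {..<n}" "a + 2 \<le> card z" "gg a f M z < f z"
  shows "\<exists>x i j. (x,(i,j)) \<in> Vset n f a \<and> insert i (insert j x) \<subseteq> z"
  using assms
proof (induction "card z" arbitrary: z rule: less_induct)
  case less
  have fz: "finite z" using less.prems finite_subset by blast
  let ?F = "(\<lambda>(i,j). gg a f M (z - {i}) + gg a f M (z - {j}) - gg a f M (z - {i,j}))"
  have "gg a f M z = min (f z) (Min (?F ` pairs z))" using gg_high less.prems by blast
  then have "Min (?F ` pairs z) < f z" using less.prems by linarith
  moreover have "finite (?F ` pairs z)" "?F ` pairs z \<noteq> {}"
    using finite_pairs[OF fz] card_pairs_ne[of z] less.prems by auto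
  ultimately obtain p where p: "p \<in> pairs z" "?F p < f z" by (auto simp: Min_less_iff)
  obtain i j where ij: "p = (i,j)" by (cases p)
  have ijz: "i \<in> z" "j \<in> z" "i \<noteq> j" using p ij by (auto simp: pairs_def)
  define x where "x = z - {i,j}"
  have zx: "z = insert i (insert j x)" "z - {i} = insert j x" "z - {j} = insert i x" "z - {i,j} = x"
    using ijz x_def by auto
  have fx: "finite x" using fz x_def by simp
  have ixx: "i \<notin> x" "j \<notin> x" using x_def by auto
  have cx: "card x + 2 = card z" "card (insert i x) + 1 = card z" "card (insert j x) + 1 = card z"
    using ixx fx ijz(3) unfolding zx(1) by auto
  have subs: "insert i x \<subseteq> {..<n}" "insert j x \<subseteq> {..<n}" "x \<subseteq> {..<n}" using less.prems(1) unfolding zx(1) by auto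
  have le: "gg a f M x \<le> f x" "gg a f M (insert i x) \<le> f (insert i x)" "gg a f M (insert j x) \<le> f (insert j x)"
    using gg_le_f cx less.prems by auto
  show ?case
  proof (cases "gg a f M (insert i x) < f (insert i x)")
    case True
    have "card (insert i x) \<noteq> a + 1" using True gg_mid[of a "insert i x" f M] by auto
    then have "a + 2 \<le> card (insert i x)" using cx less.prems by linarith
    then have "\<exists>x' i' j'. (x',(i',j')) \<in> Vset n f a \<and> insert i' (insert j' x') \<subseteq> insert i x"
      by (intro less.hyps) (use cx(2) subs(1) True in auto)
    then obtain x' i' j' where "(x',(i',j')) \<in> Vset n f a" "insert i' (insert j' x') \<subseteq> insert i x"
      by blast
    moreover have "insert i x \<subseteq> z" unfolding zx(1) by auto
    ultimately show ?thesis by blast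
  next
    case Fi: False
    show ?thesis
    proof (cases "gg a f M (insert j x) < f (insert j x)")
      case True
      have "card (insert j x) \<noteq> a + 1" using True gg_mid[of a "insert j x" f M] by auto
      then have "a + 2 \<le> card (insert j x)" using cx less.prems by linarith
      then have "\<exists>x' i' j'. (x',(i',j')) \<in> Vset n f a \<and> insert i' (insert j' x') \<subseteq> insert j x"
        by (intro less.hyps) (use cx(3) subs(2) True in auto)
      then obtain x' i' j' where "(x',(i',j')) \<in> Vset n f a" "insert i' (insert j' x') \<subseteq> insert j x"
        by blast
      moreover have "insert j x \<subseteq> z" unfolding zx(1) by auto
      ultimately show ?thesis by blast
    next
      case False
      have "gg a f M (z - {i}) + gg a f M (z - {j}) - gg a f M (z - {i,j}) < f z" using p(2) ij by simp
      then have "gg a f M (insert j x) + gg a f M (insert i x) - gg a f M x < f z" unfolding zx(2-4) .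
      then have "f z > f (insert j x) + f (insert i x) - f x"
        using Fi False le by linarith
      moreover have "i < n" "j < n" "i \<notin> x" "j \<notin> x" using ijz less.prems x_def by auto
      moreover have "a \<le> card x" using cx less.prems by linarith
      ultimately have "(x,(i,j)) \<in> Vset n f a" using subs ijz zx unfolding Vset_def by auto
      then show ?thesis using zx(1) by auto
    qed
  qed
qed



lemma card_levels:
  "card {z \<in> Pow {..<n}. P (card z)} = (\<Sum>k\<in>{k. k \<le> n \<and> P k}. n choose k)"
proof -
  have eq: "{z \<in> Pow {..<n}. P (card z)} = (\<Union>k\<in>{k. k \<le> n \<and> P k}. {z. z \<subseteq> {..<n} \<and> card z = k})"
  proof (intro equalityI subsetI)
    fix z assume "z \<in> {z \<in> Pow {..<n}. P (card z)}"
    then have "z \<subseteq> {..<n}" "P (card z)" by auto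
    moreover have "card z \<le> n" using card_mono[OF _ \<open>z \<subseteq> {..<n}\<close>] by simp
    ultimately show "z \<in> (\<Union>k\<in>{k. k \<le> n \<and> P k}. {z. z \<subseteq> {..<n} \<and> card z = k})" by auto
  qed auto
  have "card (\<Union>k\<in>{k. k \<le> n \<and> P k}. {z. z \<subseteq> {..<n} \<and> card z = k})
      = (\<Sum>k\<in>{k. k \<le> n \<and> P k}. card {z. z \<subseteq> {..<n} \<and> card z = k})"
    by (rule card_UN_disjoint) (auto intro: finite_subset[of _ "Pow {..<n}"])
  also have "\<dots> = (\<Sum>k\<in>{k. k \<le> n \<and> P k}. n choose k)"
    using n_subsets[of "{..<n}"] by simp
  finally show ?thesis using eq by simp
qed

lemma sum_pow_le: "(\<Sum>k\<le>w. (n::nat)^k) \<le> (n+1)^w"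
proof (induction w)
  case 0 then show ?case by simp
next
  case (Suc w)
  have h: "n ^ Suc w \<le> n * (n+1)^w" by (simp add: power_mono)
  have "(\<Sum>k\<le>Suc w. n^k) = (\<Sum>k\<le>w. n^k) + n^Suc w" by simp
  also have "\<dots> \<le> (n+1)^w + n*(n+1)^w" using Suc h by (rule add_mono)
  also have "\<dots> = (n+1)^Suc w" by simp
  finally show ?case .
qed

lemma card_small_subsets: "card {S \<in> Pow {..<n}. card S \<le> w} \<le> (n+1)^w"
proof -
  have "card {S \<in> Pow {..<n}. card S \<le> w} = (\<Sum>k\<in>{k. k \<le> n \<and> k \<le> w}. n choose k)"
    by (rule card_levels)
  also have "\<dots> \<le> (\<Sum>k\<in>{k. k \<le> n \<and> k \<le> w}. n ^ k)"
    by (intro sum_mono binomial_le_pow) auto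
  also have "\<dots> \<le> (\<Sum>k\<le>w. n ^ k)"
    by (intro sum_mono2) auto
  also have "\<dots> \<le> (n+1)^w" by (rule sum_pow_le)
  finally show ?thesis .
qed

lemma finite_Vset: "finite (Vset n f a)"
  by (rule finite_subset[of _ "Pow {..<n} \<times> {..<n} \<times> {..<n}"]) (auto simp: Vset_def)

lemma construct:
  fixes f :: "nat set \<Rightarrow> real"
  shows "\<exists>g. submodular n g \<and> card {z \<in> Pow {..<n}. f z \<noteq> g z}
     \<le> card {z \<in> Pow {..<n}. card z < a \<or> b < card z} + card (Vset n f a) * (n+1)^(b-a)"
proof -
  define B where "B = (\<Sum>z\<in>Pow {..<n}. \<bar>f z\<bar>)"
  have Bb: "\<bar>f z\<bar> \<le> B" if "z \<subseteq> {..<n}" for z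
    unfolding B_def by (rule member_le_sum) (use that in auto)
  define g where "g = gg a f (3*B)"
  have sub: "submodular n g"
    unfolding g_def by (rule local_global, rule gg_square[OF Bb]) auto
  define Out where "Out = {z \<in> Pow {..<n}. card z < a \<or> b < card z}"
  define K where "K = {S \<in> Pow {..<n}. card S \<le> b - a}"
  define U where "U = (\<Union>v\<in>Vset n f a. (\<lambda>S. (case v of (x,i,j) \<Rightarrow> insert i (insert j x)) \<union> S) ` K)"
  have incl: "{z \<in> Pow {..<n}. f z \<noteq> g z} \<subseteq> Out \<union> U"
  proof
    fix z assume z: "z \<in> {z \<in> Pow {..<n}. f z \<noteq> g z}"
    show "z \<in> Out \<union> U"
    proof (cases "z \<in> Out")
      case True then show ?thesis by simp
    next
      case False
      then have ab: "a \<le> card z" "card z \<le> b" using z unfolding Out_def by auto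
      have fz: "finite z" using z finite_subset by auto
      have "\<not> card z \<le> a + 1" using gg_mid[of a z f "3*B"] ab z unfolding g_def by auto
      then have a2: "a + 2 \<le> card z" by simp
      have "g z < f z" using gg_le_f[of a z f "3*B"] ab z unfolding g_def by auto
      then obtain x i j where v: "(x,(i,j)) \<in> Vset n f a" "insert i (insert j x) \<subseteq> z"
        using gg_changed[of z n a f "3*B"] z a2 unfolding g_def by blast
      let ?t = "insert i (insert j x)"
      have "a \<le> card x" using v unfolding Vset_def by auto
      moreover have "card x \<le> card ?t" using fz v(2) finite_subset[OF v(2) fz] by (intro card_mono) auto
      ultimately have "a \<le> card ?t" by simp
      moreover have "card (z - ?t) = card z - card ?t" using card_Diff_subset[OF finite_subset[OF v(2) fz] v(2)] .
      ultimately have "card (z - ?t) \<le> b - a" using ab by simp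
      then have "z - ?t \<in> K" unfolding K_def using z by auto
      moreover have "z = ?t \<union> (z - ?t)" using v(2) by auto
      ultimately have "z \<in> (\<lambda>S. ?t \<union> S) ` K" by blast
      then show ?thesis unfolding U_def using v(1) by auto
    qed
  qed
  have finK: "finite K" unfolding K_def by auto
  have "card U \<le> (\<Sum>v\<in>Vset n f a. card ((\<lambda>S. (case v of (x,i,j) \<Rightarrow> insert i (insert j x)) \<union> S) ` K))"
    unfolding U_def by (rule card_UN_le[OF finite_Vset])
  also have "\<dots> \<le> (\<Sum>v\<in>Vset n f a. card K)"
    by (intro sum_mono card_image_le finK)
  also have "\<dots> = card (Vset n f a) * card K" by simp
  also have "\<dots> \<le> card (Vset n f a) * (n+1)^(b-a)"
    unfolding K_def by (intro mult_le_mono2 card_small_subsets)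
  finally have cU: "card U \<le> card (Vset n f a) * (n+1)^(b-a)" .
  have finO: "finite Out" unfolding Out_def by auto
  have finU: "finite U" unfolding U_def using finite_Vset finK by auto
  have "card {z \<in> Pow {..<n}. f z \<noteq> g z} \<le> card (Out \<union> U)"
    by (rule card_mono) (use finO finU incl in auto)
  also have "\<dots> \<le> card Out + card U" by (rule card_Un_le)
  finally show ?thesis using sub cU unfolding Out_def by (intro exI[of _ g]) auto
qed



lemma prob_compl_UNIV: "measure_pmf.prob M (UNIV - A) = 1 - measure_pmf.prob M A"
  using measure_pmf.prob_compl[of A M] by simp

lemma set_pmf_Pow: "set_pmf (pmf_of_set (Pow {..<n::nat})) = Pow {..<n}"
  by (rule set_pmf_of_set) (auto simp: Pow_not_empty)

definition pviol :: "nat \<Rightarrow> (nat set \<Rightarrow> real) \<Rightarrow> real" where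
  "pviol n f = measure_pmf.prob (random_square n) {s. square_violated f s}"

lemma tester_eq: "tester_rejects_prob n m f = 1 - (1 - pviol n f)^m"
proof -
  have e1: "{s. \<exists>k<m. square_violated f (s k)} = UNIV - Pi {..<m} (\<lambda>_. {s. \<not> square_violated f s})"
    by auto
  have e2: "{s. \<not> square_violated f s} = UNIV - {s. square_violated f s}" by auto
  have "tester_rejects_prob n m f = 1 - measure_pmf.prob (Pi_pmf {..<m} None (\<lambda>_. random_square n))
          (Pi {..<m} (\<lambda>_. {s. \<not> square_violated f s}))"
    unfolding tester_rejects_prob_def e1 by (rule prob_compl_UNIV)
  also have "\<dots> = 1 - (\<Prod>k\<in>{..<m}. measure_pmf.prob (random_square n) {s. \<not> square_violated f s})"
    by (subst measure_Pi_pmf_Pi) auto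
  also have "\<dots> = 1 - (1 - pviol n f)^m"
    unfolding pviol_def e2 by (simp add: prob_compl_UNIV)
  finally show ?thesis .
qed

lemma set_random_square:
  assumes "s \<in> set_pmf (random_square n)"
  shows "s = None \<or> (\<exists>x i j. s = Some (x,i,j) \<and> x \<subseteq> {..<n} \<and> i < n \<and> j < n \<and> i \<notin> x \<and> j \<notin> x \<and> i \<noteq> j)"
proof -
  obtain x where x: "x \<in> Pow {..<n}" and s: "s \<in> set_pmf (if card ({..<n} - x) \<ge> 2 then
         map_pmf (\<lambda>(i, j). Some (x, i, j))
           (pmf_of_set {(i, j). i \<in> {..<n} - x \<and> j \<in> {..<n} - x \<and> i \<noteq> j})
       else return_pmf None)"
    using assms unfolding random_square_def by (auto simp: set_pmf_Pow)
  show ?thesis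
  proof (cases "card ({..<n} - x) \<ge> 2")
    case True
    have ne: "{(i, j). i \<in> {..<n} - x \<and> j \<in> {..<n} - x \<and> i \<noteq> j} \<noteq> {}"
      using card_pairs_ne[OF True] unfolding pairs_def by auto
    have fin: "finite {(i, j). i \<in> {..<n} - x \<and> j \<in> {..<n} - x \<and> i \<noteq> j}"
      by (rule finite_subset[of _ "{..<n} \<times> {..<n}"]) auto
    from s True obtain i j where "s = Some (x,i,j)" "i \<in> {..<n} - x" "j \<in> {..<n} - x" "i \<noteq> j"
      using set_pmf_of_set[OF ne fin] by auto
    then show ?thesis using x by auto
  next
    case False then show ?thesis using s by auto
  qed
qed

lemma pviol_zero: "submodular n f \<Longrightarrow> pviol n f = 0"
  unfolding pviol_def
proof (subst measure_pmf_zero_iff, rule ccontr)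
  assume sm: "submodular n f" and "set_pmf (random_square n) \<inter> {s. square_violated f s} \<noteq> {}"
  then obtain s where s: "s \<in> set_pmf (random_square n)" "square_violated f s" by auto
  then obtain x i j where "s = Some (x,i,j)" "x \<subseteq> {..<n}" "i < n" "j < n" "i \<notin> x" "j \<notin> x" "i \<noteq> j"
    using set_random_square[OF s(1)] by auto
  moreover have "f (insert i x) - f x \<ge> f (insert i (insert j x)) - f (insert j x)"
    using sm calculation unfolding submodular_def
    by (metis insert_subset subset_insertI insert_iff lessThan_iff)
  ultimately show False using s(2) by auto
qed

lemma pmf_rs_lower:
  assumes v: "(x,(i,j)) \<in> Vset n f a"
  shows "pmf (random_square n) (Some (x,i,j)) \<ge> 1 / (2^n * real n ^ 2)"
proof -
  have xs: "x \<subseteq> {..<n}" "i < n" "j < n" "i \<notin> x" "j \<notin> x" "i \<noteq> j" using v unfolding Vset_def by auto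
  define Pr where "Pr = {(i, j). i \<in> {..<n} - x \<and> j \<in> {..<n} - x \<and> i \<noteq> j}"
  have finPr: "finite Pr" unfolding Pr_def by (rule finite_subset[of _ "{..<n} \<times> {..<n}"]) auto
  have ijP: "(i,j) \<in> Pr" using xs unfolding Pr_def by auto
  have cPr: "card Pr \<le> n^2"
  proof -
    have "card Pr \<le> card ({..<n} \<times> {..<n})" by (rule card_mono) (auto simp: Pr_def)
    then show ?thesis by (simp add: power2_eq_square)
  qed
  have c2: "card ({..<n} - x) \<ge> 2"
  proof -
    have "{i,j} \<subseteq> {..<n} - x" using xs by auto
    then have "card {i,j} \<le> card ({..<n} - x)" by (intro card_mono) auto
    then show ?thesis using xs by simp
  qed
  define F where "F = (\<lambda>x. if card ({..<n} - x) \<ge> 2 then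
         map_pmf (\<lambda>(i, j). Some (x, i, j))
           (pmf_of_set {(i, j). i \<in> {..<n} - x \<and> j \<in> {..<n} - x \<and> i \<noteq> j})
       else return_pmf None)"
  have Fx: "F x = map_pmf (\<lambda>(i, j). Some (x, i, j)) (pmf_of_set Pr)" unfolding F_def Pr_def using c2 by simp
  have inj: "inj (\<lambda>(i, j). Some (x, i, j))" by (auto simp: inj_def)
  have "pmf (F x) (Some (x,i,j)) = pmf (pmf_of_set Pr) (i,j)"
    unfolding Fx using pmf_map_inj'[OF inj, of "pmf_of_set Pr" "(i,j)"] by simp
  also have "\<dots> = indicator Pr (i,j) / card Pr"
    by (rule pmf_of_set) (use ijP finPr in auto)
  also have "\<dots> = 1 / card Pr" using ijP by simp
  finally have pF: "pmf (F x) (Some (x,i,j)) = 1 / card Pr" .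
  have finPow: "finite (Pow {..<n})" "Pow {..<n} \<noteq> {}" by auto
  have "pmf (random_square n) (Some (x,i,j)) = (\<Sum>y\<in>Pow {..<n}. pmf (F y) (Some (x,i,j))) / card (Pow {..<n})"
    unfolding random_square_def F_def[symmetric] pmf_bind using integral_pmf_of_set[OF finPow(2) finPow(1)] by simp
  also have "\<dots> \<ge> pmf (F x) (Some (x,i,j)) / card (Pow {..<n})"
    by (intro divide_right_mono member_le_sum) (use xs in auto)
  finally have "pmf (random_square n) (Some (x,i,j)) \<ge> 1 / card Pr / 2^n"
    using pF by (simp add: card_Pow)
  moreover have "1 / card Pr / 2^n \<ge> 1 / (2^n * real n ^ 2)"
  proof -
    have "card Pr > 0" using ijP finPr by (auto simp: card_gt_0_iff)
    moreover have "real (card Pr) \<le> real n ^ 2" using cPr by (metis of_nat_le_iff of_nat_power)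
    ultimately have h: "0 < real (card Pr)" "real (card Pr) \<le> real n ^ 2" by auto
    have "1/(2^n * real n^2) \<le> 1/(2^n * real (card Pr))"
      by (rule divide_left_mono) (use h xs(2) in \<open>auto intro: mult_left_mono\<close>)
    then show ?thesis by (simp add: divide_divide_eq_left mult.commute)
  qed
  ultimately show ?thesis by linarith
qed

lemma pviol_lower: "pviol n f \<ge> card (Vset n f a) / (2^n * real n ^ 2)"
proof -
  define S where "S = (\<lambda>(x,i,j). Some (x,i,j)) ` Vset n f a"
  have inj: "inj_on (\<lambda>(x,i,j). Some (x,i,j)) (Vset n f a)" by (auto simp: inj_on_def)
  have finS: "finite S" unfolding S_def using finite_Vset by auto
  have "S \<subseteq> {s. square_violated f s}" unfolding S_def Vset_def by auto
  then have "pviol n f \<ge> measure_pmf.prob (random_square n) S"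
    unfolding pviol_def by (intro measure_pmf.finite_measure_mono) auto
  also have "measure_pmf.prob (random_square n) S = (\<Sum>s\<in>S. pmf (random_square n) s)"
    by (rule measure_measure_pmf_finite[OF finS])
  also have "\<dots> = (\<Sum>v\<in>Vset n f a. pmf (random_square n) (case v of (x,i,j) \<Rightarrow> Some (x,i,j)))"
    unfolding S_def by (subst sum.reindex[OF inj]) (simp add: o_def)
  also have "\<dots> \<ge> (\<Sum>v\<in>Vset n f a. 1 / (2^n * real n ^ 2))"
    by (intro sum_mono) (use pmf_rs_lower in auto)
  finally show ?thesis by simp
qed



lemma binom_tail:
  assumes n: "n > 0" and t: "t \<ge> 0"
  shows "real (card {z \<in> Pow {..<n}. \<bar>real (card z) - real n / 2\<bar> \<ge> t}) \<le> 2^n * (2 * exp (-2 * t^2 / n))"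
proof -
  interpret binomial_distribution n "1/2" by unfold_locales auto
  have h: "measure_pmf.prob (binomial_pmf n (1/2)) {x. \<bar>real x - real n * (1/2)\<bar> \<ge> t} \<le> 2 * exp (-2 * t^2 / n)"
    by (rule prob_abs_ge[OF n t])
  define S where "S = {k. k \<le> n \<and> \<bar>real k - real n / 2\<bar> \<ge> t}"
  have finS: "finite S" unfolding S_def by auto
  have "measure_pmf.prob (binomial_pmf n (1/2)) {x. \<bar>real x - real n * (1/2)\<bar> \<ge> t}
      = measure_pmf.prob (binomial_pmf n (1/2)) S"
    by (intro measure_prob_cong_0) (auto simp: S_def)
  also have "\<dots> = (\<Sum>k\<in>S. pmf (binomial_pmf n (1/2)) k)" by (rule measure_measure_pmf_finite[OF finS])
  also have "\<dots> = (\<Sum>k\<in>S. real (n choose k) / 2^n)"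
  proof (intro sum.cong refl)
    fix k assume "k \<in> S"
    then have "k \<le> n" unfolding S_def by auto
    then have e: "(1/2::real)^k * (1 - 1/2)^(n-k) = 1 / 2^n"
      by (simp add: power_add[symmetric] power_divide)
    have "pmf (binomial_pmf n (1/2)) k = real (n choose k) * ((1/2::real)^k * (1 - 1/2)^(n-k))"
      by (simp only: pmf_binomial mult.assoc)
    then show "pmf (binomial_pmf n (1/2)) k = real (n choose k) / 2^n" unfolding e by simp
  qed
  also have "\<dots> = real (\<Sum>k\<in>S. n choose k) / 2^n" by (simp add: sum_divide_distrib)
  also have "(\<Sum>k\<in>S. n choose k) = card {z \<in> Pow {..<n}. \<bar>real (card z) - real n / 2\<bar> \<ge> t}"
    unfolding S_def by (rule card_levels[symmetric])
  finally have "real (card {z \<in> Pow {..<n}. \<bar>real (card z) - real n / 2\<bar> \<ge> t}) / 2^n \<le> 2 * exp (-2 * t^2 / n)"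
    using h by simp
  then show ?thesis by (simp add: field_simps)
qed



lemma exp2_ge4: "exp (2::real) \<ge> 4"
proof -
  have "exp (1::real) \<ge> 2" using exp_ge_add_one_self[of 1] by simp
  moreover have "exp (2::real) = exp 1 * exp 1" by (simp add: exp_add[symmetric])
  ultimately have "exp (2::real) \<ge> 2 * 2" by (metis mult_mono exp_ge_zero zero_le_numeral)
  then show ?thesis by simp
qed

lemma card_Pow_split:
  "card {z \<in> Pow {..<n}. P z} + card {z \<in> Pow {..<n}. \<not> P z} = 2^n"
proof -
  have "card {z \<in> Pow {..<n}. P z} + card {z \<in> Pow {..<n}. \<not> P z} = card ({z \<in> Pow {..<n}. P z} \<union> {z \<in> Pow {..<n}. \<not> P z})"
    by (rule card_Un_disjoint[symmetric]) auto
  also have "{z \<in> Pow {..<n}. P z} \<union> {z \<in> Pow {..<n}. \<not> P z} = Pow {..<n}" by auto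
  finally show ?thesis by (simp add: card_Pow)
qed

lemma central_binom:
  assumes n: "n \<ge> 1"
  shows "real (n choose (n div 2)) \<ge> 2^n / (6 * sqrt n)"
proof -
  define t where "t = sqrt (real n)"
  have t1: "t \<ge> 1" using n unfolding t_def by simp
  have tt: "t^2 = real n" unfolding t_def by simp
  define Bm where "Bm = real (n choose (n div 2))"
  have tail: "real (card {z \<in> Pow {..<n}. \<bar>real (card z) - real n / 2\<bar> \<ge> t}) \<le> 2^n * (2 * exp (-2 * t^2 / n))"
    using binom_tail[of n t] n t1 by simp
  have "exp (-2 * t^2 / n) = exp (-2)" using tt n by simp
  also have "\<dots> = 1 / exp 2" by (simp add: exp_minus field_simps)
  also have "\<dots> \<le> 1/4" using exp2_ge4 by (simp add: field_simps)
  finally have "exp (-2 * t^2 / n) \<le> 1/4" .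
  then have "(2::real)^n * (2 * exp (-2 * t^2 / n)) \<le> 2^n * (2 * (1/4))"
    by (intro mult_left_mono) auto
  then have tl: "real (card {z \<in> Pow {..<n}. \<bar>real (card z) - real n / 2\<bar> \<ge> t}) \<le> 2^n / 2"
    using tail by linarith
  have sp: "card {z \<in> Pow {..<n}. \<bar>real (card z) - real n / 2\<bar> < t} + card {z \<in> Pow {..<n}. \<not> \<bar>real (card z) - real n / 2\<bar> < t} = 2^n"
    by (rule card_Pow_split)
  have "{z \<in> Pow {..<n}. \<not> \<bar>real (card z) - real n / 2\<bar> < t} = {z \<in> Pow {..<n}. \<bar>real (card z) - real n / 2\<bar> \<ge> t}"
    by (simp add: not_less)
  then have sp': "card {z \<in> Pow {..<n}. \<bar>real (card z) - real n / 2\<bar> < t} + card {z \<in> Pow {..<n}. \<bar>real (card z) - real n / 2\<bar> \<ge> t} = 2^n"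
    using sp by simp
  have "real (card {z \<in> Pow {..<n}. \<bar>real (card z) - real n / 2\<bar> < t}) + real (card {z \<in> Pow {..<n}. \<bar>real (card z) - real n / 2\<bar> \<ge> t}) = 2^n"
    using arg_cong[OF sp', of real] by simp
  then have win: "real (card {z \<in> Pow {..<n}. \<bar>real (card z) - real n / 2\<bar> < t}) \<ge> 2^n / 2"
    using tl by linarith
  define lo where "lo = nat \<lceil>real n / 2 - t\<rceil>"
  define hi where "hi = nat \<lfloor>real n / 2 + t\<rfloor>"
  have Kw: "{k. k \<le> n \<and> \<bar>real k - real n / 2\<bar> < t} \<subseteq> {lo..hi}"
  proof
    fix k assume "k \<in> {k. k \<le> n \<and> \<bar>real k - real n / 2\<bar> < t}"
    then have k: "real k > real n / 2 - t" "real k < real n / 2 + t" by auto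
    have "lo \<le> k" unfolding lo_def using k(1) by (simp add: nat_le_iff ceiling_le_iff)
    moreover have "k \<le> hi" unfolding hi_def using k(2) by (simp add: le_nat_iff le_floor_iff)
    ultimately show "k \<in> {lo..hi}" by auto
  qed
  have chi: "real (card {lo..hi}) \<le> 2 * t + 1"
  proof (cases "lo \<le> hi")
    case True
    have "real hi \<le> real n / 2 + t" unfolding hi_def using t1 by simp
    moreover have "real lo \<ge> real n / 2 - t" unfolding lo_def by linarith
    ultimately show ?thesis using True by (simp add: of_nat_diff)
  next
    case False then show ?thesis using t1 by simp
  qed
  have "card {z \<in> Pow {..<n}. \<bar>real (card z) - real n / 2\<bar> < t} = (\<Sum>k\<in>{k. k \<le> n \<and> \<bar>real k - real n / 2\<bar> < t}. n choose k)"
    by (rule card_levels)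
  also have "\<dots> \<le> (\<Sum>k\<in>{lo..hi}. n choose k)" by (rule sum_mono2[OF _ Kw]) auto
  also have "\<dots> \<le> (\<Sum>k\<in>{lo..hi}. n choose (n div 2))" by (intro sum_mono binomial_maximum)
  also have "\<dots> = card {lo..hi} * (n choose (n div 2))" by simp
  finally have "real (card {z \<in> Pow {..<n}. \<bar>real (card z) - real n / 2\<bar> < t}) \<le> real (card {lo..hi} * (n choose (n div 2)))"
    by (simp only: of_nat_le_iff)
  then have "real (card {z \<in> Pow {..<n}. \<bar>real (card z) - real n / 2\<bar> < t}) \<le> real (card {lo..hi}) * Bm"
    unfolding Bm_def by simp
  also have "\<dots> \<le> (2 * t + 1) * Bm" by (rule mult_right_mono[OF chi]) (simp add: Bm_def)
  also have "\<dots> \<le> 3 * t * Bm" using t1 by (intro mult_right_mono) (auto simp: Bm_def)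
  finally have "2^n / 2 \<le> 3 * t * Bm" using win by linarith
  then show ?thesis unfolding Bm_def t_def using t1 by (simp add: field_simps t_def)
qed

lemma binom_step: "(k+1) * (n choose (k+1)) = (n - k) * (n choose k)"
  using times_binomial_minus1_eq[of "k+1" n] binomial_absorb_comp[of n k] by simp

lemma binom_ratio:
  assumes n: "n > 0" and c: "c = n div 2" and cj: "c + j \<le> n"
  shows "real (n choose (c+j)) \<ge> real (n choose c) * (1 - 2 * real j^2 / n)"
  using cj
proof (induction j)
  case 0 then show ?case by simp
next
  case (Suc j)
  define Bm where "Bm = real (n choose c)"
  define r where "r = real (n choose (c+j))"
  define r' where "r' = real (n choose (c + Suc j))"
  have ih: "r \<ge> Bm * (1 - 2 * real j^2 / n)" using Suc unfolding r_def Bm_def by simp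
  have rB: "r \<le> Bm" "r \<ge> 0" unfolding r_def Bm_def c using binomial_maximum by auto
  have step: "real (c+j+1) * r' = real (n - (c+j)) * r"
    unfolding r_def r'_def using binom_step[of "c+j" n] by (metis Suc_eq_plus1 add_Suc_right of_nat_mult)
  have cjn: "c + j < n" using Suc.prems by simp
  have D: "real (c+j+1) > 0" by simp
  have twoc: "2 * real c \<ge> real n - 1" "2 * real c \<le> real n" unfolding c by linarith+
  define x where "x = 2 * (2 * real j + 1) / n"
  have x0: "x \<ge> 0" unfolding x_def using n by simp
  have q: "real (n - (c+j)) \<ge> real (c+j+1) * (1 - x)"
  proof -
    have "real (c+j+1) * x = 2 * (2 * real j + 1) * real (c+j+1) / n" unfolding x_def by simp
    moreover have "2 * (2 * real j + 1) * real (c+j+1) / n \<ge> 2 * real j + 1"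
    proof -
      have "2 * real (c+j+1) \<ge> real n" using twoc by simp
      then have "(2 * real j + 1) * (2 * real (c+j+1)) \<ge> (2 * real j + 1) * real n"
        by (intro mult_left_mono) auto
      then show ?thesis using n by (simp add: field_simps)
    qed
    ultimately have "real (c+j+1) * (1 - x) \<le> real (c+j+1) - (2 * real j + 1)" by (simp add: algebra_simps)
    also have "\<dots> \<le> real (n - (c+j))" using cjn twoc by (simp add: of_nat_diff)
    finally show ?thesis .
  qed
  have "real (c+j+1) * r' \<ge> real (c+j+1) * ((1 - x) * r)"
    unfolding step using mult_right_mono[OF q rB(2)] by (simp add: algebra_simps)
  then have r'1: "r' \<ge> (1 - x) * r" using D by (simp add: mult_le_cancel_left)
  have "(1 - x) * r = r - x * r" by (simp add: algebra_simps)
  also have "\<dots> \<ge> r - x * Bm" using mult_left_mono[OF rB(1) x0] by linarith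
  finally have "r' \<ge> Bm * (1 - 2 * real j^2 / n) - x * Bm" using r'1 ih by linarith
  also have "Bm * (1 - 2 * real j^2 / n) - x * Bm = Bm * (1 - 2 * real (Suc j)^2 / n)"
    unfolding x_def using n by (simp add: field_simps power2_eq_square)
  finally show ?case unfolding r'_def Bm_def .
qed

lemma band_mass:
  assumes n: "n > 0" and c: "c = n div 2" and J: "4 * J^2 \<le> n" "c + J \<le> n"
  shows "real (\<Sum>k\<in>{c..c+J}. n choose k) \<ge> real (J+1) * real (n choose c) / 2"
proof -
  have "(\<Sum>k\<in>{c..c+J}. real (n choose k)) \<ge> (\<Sum>k\<in>{c..c+J}. real (n choose c) / 2)"
  proof (intro sum_mono)
    fix k assume k: "k \<in> {c..c+J}"
    define j where "j = k - c"
    have kj: "k = c + j" "j \<le> J" using k j_def by auto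
    have "real (n choose (c+j)) \<ge> real (n choose c) * (1 - 2 * real j^2 / n)"
      by (rule binom_ratio[OF n c]) (use kj J in auto)
    moreover have "1 - 2 * real j^2 / n \<ge> 1/2"
    proof -
      have "real j^2 \<le> real J^2" using kj by (simp add: power_mono)
      moreover have "4 * real J^2 \<le> real n" using J(1) by (metis of_nat_le_iff of_nat_mult of_nat_numeral of_nat_power)
      ultimately have "4 * real j^2 \<le> real n" by linarith
      then show ?thesis using n by (simp add: field_simps)
    qed
    moreover have "real (n choose c) * (1 - 2 * real j^2 / n) \<ge> real (n choose c) * (1/2)"
      using calculation(2) by (intro mult_left_mono) auto
    ultimately show "real (n choose k) \<ge> real (n choose c) / 2" unfolding kj(1) by linarith
  qed
  then show ?thesis by simp
qed



lemma construct_narrow: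
  fixes f :: "nat set \<Rightarrow> real"
  shows "\<exists>g. submodular n g \<and> card {z \<in> Pow {..<n}. f z \<noteq> g z}
     \<le> card {z \<in> Pow {..<n}. card z \<noteq> a}"
proof -
  define B where "B = (\<Sum>z\<in>Pow {..<n}. \<bar>f z\<bar>)"
  have Bb: "\<bar>f z\<bar> \<le> B" if "z \<subseteq> {..<n}" for z
    unfolding B_def by (rule member_le_sum) (use that in auto)
  define g where "g = gg a f (3*B)"
  have sub: "submodular n g"
    unfolding g_def by (rule local_global, rule gg_square[OF Bb]) auto
  have "{z \<in> Pow {..<n}. f z \<noteq> g z} \<subseteq> {z \<in> Pow {..<n}. card z \<noteq> a}"
  proof (intro subsetI CollectI conjI)
    fix z assume z: "z \<in> {z \<in> Pow {..<n}. f z \<noteq> g z}"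
    then show "z \<in> Pow {..<n}" by simp
    show "card z \<noteq> a"
    proof
      assume "card z = a"
      then have "g z = f z" unfolding g_def by (intro gg_mid) auto
      then show False using z by simp
    qed
  qed
  then have "card {z \<in> Pow {..<n}. f z \<noteq> g z} \<le> card {z \<in> Pow {..<n}. card z \<noteq> a}"
    by (intro card_mono) auto
  then show ?thesis using sub by blast
qed

lemma small_n_submodular: "n \<le> 1 \<Longrightarrow> submodular n f"
  unfolding submodular_def
proof (intro allI impI)
  fix i x y assume "n \<le> 1" "i < n" "x \<subseteq> y" "y \<subseteq> {..<n}" "i \<notin> y"
  then have n1: "n = 1" "i = 0" by auto
  then have "y \<subseteq> {0}" using \<open>y \<subseteq> {..<n}\<close> by auto
  then have "y = {}" using \<open>i \<notin> y\<close> n1 by auto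
  then have "x = {}" using \<open>x \<subseteq> y\<close> by auto
  then show "f (insert i y) - f y \<le> f (insert i x) - f x" using \<open>y = {}\<close> by simp
qed

lemma far_less:
  assumes "eps_far_submodular n \<epsilon> f" "submodular n g"
  shows "\<epsilon> * 2^n < real (card {x \<in> Pow {..<n}. f x \<noteq> g x})"
  using assms unfolding eps_far_submodular_def by auto

lemma pow_exp: "real ((n+1)^k) = exp (real k * ln (real n + 1))"
proof -
  have "exp (real k * ln (real n + 1)) = exp (ln (real n + 1)) ^ k" by (rule exp_of_nat_mult)
  also have "\<dots> = (real n + 1)^k" by simp
  finally show ?thesis by (simp add: add.commute)
qed

lemma reject_prob:
  fixes p :: real and m :: nat
  assumes "0 \<le> p" "p \<le> 1" "p * real m \<ge> 2"
  shows "1 - (1 - p)^m > 2/3"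
proof -
  have "(1 - p)^m \<le> exp (-p)^m"
    by (rule power_mono) (use exp_ge_add_one_self[of "-p"] assms in auto)
  also have "\<dots> = exp (- (p * real m))" using exp_of_nat_mult[of m "-p"] by (simp add: mult.commute)
  also have "\<dots> \<le> exp (-2)" using assms(3) by (subst exp_le_cancel_iff) linarith
  also have "\<dots> = 1 / exp 2" by (simp add: exp_minus field_simps)
  also have "\<dots> \<le> 1/4" using exp2_ge4 by (simp add: field_simps)
  finally show ?thesis by simp
qed

lemma pviol_bounds: "0 \<le> pviol n f" "pviol n f \<le> 1"
  unfolding pviol_def by auto

lemma Vset_mono: "card (Vset n f a) \<le> card (Vset n f 0)"
  by (rule card_mono[OF finite_Vset]) (auto simp: Vset_def)

lemma ln2: "ln (2::real) \<ge> 1/2" "ln (2::real) \<le> 1"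
proof -
  have "ln (1/2::real) \<le> 1/2 - 1" by (rule ln_le_minus_one) auto
  then show "ln (2::real) \<ge> 1/2" by (simp add: ln_div)
  show "ln (2::real) \<le> 1" using ln_le_minus_one[of 2] by simp
qed



lemma sqrt_le_self': "x \<ge> 1 \<Longrightarrow> sqrt x \<le> (x::real)"
proof -
  assume x: "x \<ge> 1"
  have "x \<le> x * x" using x mult_left_mono[of 1 x x] by simp
  then have "sqrt x \<le> sqrt (x * x)" by (rule real_sqrt_le_mono)
  also have "\<dots> = x" using x by (simp add: real_sqrt_mult_self)
  finally show ?thesis .
qed

lemma ln_succ_le: "n \<ge> 2 \<Longrightarrow> ln (real n + 1) \<le> 2 * ln (real n)"
proof -
  assume n: "n \<ge> 2"
  have "real n + 1 \<le> real n ^ 2"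
  proof -
    have "real n * real n \<ge> 2 * real n" using n by (intro mult_right_mono) auto
    moreover have "real n \<ge> 2" using n by simp
    ultimately show ?thesis unfolding power2_eq_square by linarith
  qed
  then have "ln (real n + 1) \<le> ln (real n ^ 2)" using n by (intro ln_mono) auto
  also have "\<dots> = 2 * ln (real n)" using n by (simp add: ln_realpow)
  finally show ?thesis .
qed

lemma powr_exp: "(\<epsilon>::real) > 0 \<Longrightarrow> (1/\<epsilon>) powr y = exp (y * ln (1/\<epsilon>))"
  by (simp add: powr_def)


lemma caseA:
  fixes f :: "nat set \<Rightarrow> real"
  assumes far: "eps_far_submodular n \<epsilon> f" and e0: "\<epsilon> > 0" and e1: "\<epsilon> \<le> 95/96" and n2: "n \<ge> 2"
  shows "pviol n f * (1/\<epsilon>) powr (2000 * sqrt n * ln n) \<ge> 2"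
proof -
  define N where "N = (2::real)^n"
  have N0: "N > 0" unfolding N_def by simp
  define L where "L = ln (1/\<epsilon>)"
  have lneps: "ln \<epsilon> = - L" unfolding L_def using e0 by (simp add: ln_div)
  have "ln \<epsilon> \<le> \<epsilon> - 1" using e0 by (rule ln_le_minus_one)
  then have L96: "L \<ge> 1/96" using lneps e1 by linarith
  define S where "S = sqrt (real n) * ln (real n)"
  have sq1: "sqrt (real n) \<ge> 1" using n2 by simp
  have "ln (2::real) \<le> ln (real n)" using n2 by (subst ln_le_cancel_iff) auto
  then have ln2n: "ln (real n) \<ge> 1/2" using ln2(1) by linarith
  have S_half: "S \<ge> 1/2" unfolding S_def using sq1 ln2n mult_mono[OF sq1 ln2n] by simp
  have S_ln: "S \<ge> ln (real n)" unfolding S_def using sq1 ln2n mult_right_mono[OF sq1, of "ln (real n)"] by simp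
  define lam where "lam = ln 4 + L"
  have ln4: "ln (4::real) \<le> 2"
  proof -
    have "ln ((2::real)^2) = real 2 * ln 2" by (rule ln_realpow) 
    then have "ln (4::real) = 2 * ln 2" by simp
    then show ?thesis using ln2(2) by simp
  qed
  have ln4p: "ln (4::real) > 0" by simp
  have lam_eq: "lam = ln (4/\<epsilon>)" unfolding lam_def L_def using e0 by (simp add: ln_div)
  have lam0: "lam > 0" unfolding lam_def using ln4p L96 by linarith
  have lam193: "lam \<le> 193 * L" unfolding lam_def using ln4 L96 by linarith
  define t where "t = sqrt (real n * lam / 2)"
  have t0: "t \<ge> 0" unfolding t_def using lam0 by simp
  have tsq: "t^2 = real n * lam / 2" unfolding t_def using lam0 by simp
  define a where "a = nat \<lceil>real n / 2 - t\<rceil>"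
  define b where "b = nat \<lfloor>real n / 2 + t\<rfloor>"
  obtain g where g: "submodular n g"
    "card {z \<in> Pow {..<n}. f z \<noteq> g z} \<le> card {z \<in> Pow {..<n}. card z < a \<or> b < card z} + card (Vset n f a) * (n+1)^(b-a)"
    using construct[of n f a b] by blast
  have fl: "\<epsilon> * N < real (card {z \<in> Pow {..<n}. f z \<noteq> g z})" using far_less[OF far g(1)] unfolding N_def .
  have outsub: "{z \<in> Pow {..<n}. card z < a \<or> b < card z} \<subseteq> {z \<in> Pow {..<n}. \<bar>real (card z) - real n / 2\<bar> \<ge> t}"
  proof
    fix z assume z: "z \<in> {z \<in> Pow {..<n}. card z < a \<or> b < card z}"
    then have "card z < a \<or> b < card z" by simp
    then have "real (card z) < real n / 2 - t \<or> real (card z) > real n / 2 + t"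
    proof
      assume "card z < a"
      then have "int (card z) < \<lceil>real n / 2 - t\<rceil>" unfolding a_def by linarith
      then show ?thesis by (simp add: less_ceiling_iff)
    next
      assume "b < card z"
      then have "\<lfloor>real n / 2 + t\<rfloor> < int (card z)" unfolding b_def using t0 by linarith
      then show ?thesis by (simp add: floor_less_iff)
    qed
    then show "z \<in> {z \<in> Pow {..<n}. \<bar>real (card z) - real n / 2\<bar> \<ge> t}" using z by auto
  qed
  have "real (card {z \<in> Pow {..<n}. card z < a \<or> b < card z}) \<le> real (card {z \<in> Pow {..<n}. \<bar>real (card z) - real n / 2\<bar> \<ge> t})"
    using card_mono[OF _ outsub] by simp
  also have "\<dots> \<le> 2^n * (2 * exp (-2 * t^2 / n))" using binom_tail[of n t] n2 t0 by simp
  also have "exp (-2 * t^2 / n) = \<epsilon> / 4"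
  proof -
    have "-2 * t^2 / n = - lam" using tsq n2 by (simp add: field_simps)
    then have "exp (-2 * t^2 / n) = exp (- ln (4/\<epsilon>))" using lam_eq by simp
    also have "\<dots> = \<epsilon> / 4" using e0 by (simp add: exp_minus)
    finally show ?thesis .
  qed
  finally have cOut: "real (card {z \<in> Pow {..<n}. card z < a \<or> b < card z}) \<le> \<epsilon> * N / 2" unfolding N_def by (simp add: mult.commute)
  have ba: "real (b - a) \<le> 2 * t"
  proof (cases "a \<le> b")
    case True
    have "real b \<le> real n / 2 + t" unfolding b_def using t0 by simp
    moreover have "real a \<ge> real n / 2 - t" unfolding a_def by linarith
    ultimately show ?thesis using True by (simp add: of_nat_diff)
  next
    case False then show ?thesis using t0 by simp
  qed
  define E where "E = exp (2 * t * ln (real n + 1))"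
  have E0: "E > 0" unfolding E_def by simp
  have KE: "real ((n+1)^(b-a)) \<le> E"
    unfolding pow_exp E_def using ba by (intro exp_mono mult_right_mono) auto
  define V where "V = real (card (Vset n f 0))"
  have V0: "V \<ge> 0" unfolding V_def by simp
  have Va: "real (card (Vset n f a)) \<le> V" unfolding V_def using Vset_mono by simp
  have "\<epsilon> * N < \<epsilon> * N / 2 + real (card (Vset n f a)) * real ((n+1)^(b-a))"
    using fl g(2) cOut by (smt (verit) of_nat_add of_nat_le_iff of_nat_mult)
  also have "real (card (Vset n f a)) * real ((n+1)^(b-a)) \<le> V * E"
    using Va KE by (intro mult_mono) (auto simp: V0)
  finally have VE: "V * E > \<epsilon> * N / 2" by simp
  have p: "pviol n f \<ge> V / (N * real n ^ 2)" unfolding V_def N_def by (rule pviol_lower)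
  define R where "R = (1/\<epsilon>) powr (2000 * sqrt n * ln n)"
  have R: "R = exp (2000 * S * L)" unfolding R_def S_def L_def using powr_exp[OF e0] by (simp add: mult_ac)
  have t_le: "t \<le> sqrt (real n) * (193 * L)"
  proof -
    have "lam / 2 \<le> 193 * L" using lam193 lam0 by linarith
    then have "real n * (lam / 2) \<le> real n * (193*L)" by (intro mult_left_mono) auto
    then have "t \<le> sqrt (real n * (193 * L))" unfolding t_def by (intro real_sqrt_le_mono) simp
    also have "\<dots> = sqrt (real n) * sqrt (193 * L)" by (simp add: real_sqrt_mult)
    also have "sqrt (193 * L) \<le> 193 * L" using L96 by (intro sqrt_le_self') simp
    then have "sqrt (real n) * sqrt (193 * L) \<le> sqrt (real n) * (193 * L)" by (intro mult_left_mono) auto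
    finally show ?thesis .
  qed
  have lnn1: "ln (real n + 1) \<le> 2 * ln (real n)" using ln_succ_le[OF n2] .
  have lnn0: "ln (real n + 1) \<ge> 0" by simp
  have "2 * t * ln (real n + 1) \<le> 2 * (sqrt (real n) * (193 * L)) * (2 * ln (real n))"
    using t_le lnn1 t0 lnn0 by (intro mult_mono) auto
  also have "\<dots> = 772 * L * S" unfolding S_def by (simp add: algebra_simps)
  finally have k1: "2 * t * ln (real n + 1) \<le> 772 * L * S" .
  have k2: "2 \<le> 384 * L * S"
  proof -
    have "L * (1/2) \<le> L * S" using S_half L96 by (intro mult_left_mono) auto
    then show ?thesis using L96 by linarith
  qed
  have k3: "2 * ln (real n) \<le> 192 * L * S"
  proof -
    have "L * ln (real n) \<le> L * S" using S_ln L96 by (intro mult_left_mono) auto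
    moreover have "(1/96) * ln (real n) \<le> L * ln (real n)" using L96 ln2n by (intro mult_right_mono) auto
    ultimately show ?thesis by linarith
  qed
  have k4: "L \<le> 2 * L * S"
  proof -
    have "L * (1/2) \<le> L * S" using S_half L96 by (intro mult_left_mono) auto
    then show ?thesis by linarith
  qed
  have k5: "0 \<le> L * S" using L96 S_half by simp
  have key: "ln 4 + 2 * ln (real n) + 2 * t * ln (real n + 1) \<le> - L + 2000 * S * L"
    using ln4 k1 k2 k3 k4 k5 by (simp add: algebra_simps)
  have "4 * real n ^ 2 * E = exp (ln 4 + 2 * ln (real n) + 2 * t * ln (real n + 1))"
  proof -
    have e2: "exp (2 * ln (real n)) = real n ^ 2" using exp_of_nat_mult[of 2 "ln (real n)"] n2 by simp
    show ?thesis unfolding E_def exp_add e2 by simp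
  qed
  also have "\<dots> \<le> exp (- L + 2000 * S * L)" using key by simp
  also have "\<dots> = \<epsilon> * R"
  proof -
    have "exp (- L) = \<epsilon>" using lneps e0 by (metis exp_ln)
    then show ?thesis unfolding R exp_add by simp
  qed
  finally have eR: "4 * real n ^ 2 * E \<le> \<epsilon> * R" .
  have nn: "real n ^ 2 > 0" using n2 by simp
  have R0: "R \<ge> 0" unfolding R by simp
  have "V * R \<ge> 2 * (N * real n ^ 2)"
  proof -
    have "\<epsilon> * N / 2 * R \<le> V * E * R" using VE R0 by (intro mult_right_mono) auto
    moreover have "4 * real n ^ 2 * E * (N / 2) \<le> \<epsilon> * R * (N / 2)" using eR N0 by (intro mult_right_mono) auto
    ultimately have "2 * (N * real n ^ 2) * E \<le> V * R * E" by (simp add: algebra_simps)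
    then show ?thesis using E0 by (simp add: mult_le_cancel_right)
  qed
  then have "V / (N * real n ^ 2) * R \<ge> 2" using N0 nn by (simp add: field_simps)
  moreover have "pviol n f * R \<ge> V / (N * real n ^ 2) * R" using p R0 by (intro mult_right_mono) auto
  ultimately show ?thesis unfolding R_def by linarith
qed



lemma eps_lt1:
  assumes far: "eps_far_submodular n \<epsilon> f" shows "\<epsilon> < 1"
proof -
  have sub: "submodular n (\<lambda>_. 0)" unfolding submodular_def by simp
  have "\<epsilon> * 2^n < real (card {x \<in> Pow {..<n}. f x \<noteq> 0})" using far_less[OF far sub] .
  also have "card {x \<in> Pow {..<n}. f x \<noteq> 0} \<le> card (Pow {..<n})" by (rule card_mono) auto
  then have "real (card {x \<in> Pow {..<n}. f x \<noteq> 0}) \<le> 2^n" by (simp add: card_Pow)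
  finally show ?thesis by simp
qed

lemma caseB:
  fixes f :: "nat set \<Rightarrow> real"
  assumes far: "eps_far_submodular n \<epsilon> f" and e0: "\<epsilon> > 0" and e1: "\<epsilon> > 95/96" and n2: "n \<ge> 2"
  shows "pviol n f * (1/\<epsilon>) powr (2000 * sqrt n * ln n) \<ge> 2"
proof -
  define N where "N = (2::real)^n"
  have N0: "N > 0" unfolding N_def by simp
  have elt: "\<epsilon> < 1" by (rule eps_lt1[OF far])
  define \<delta> where "\<delta> = 1 - \<epsilon>"
  have d0: "\<delta> > 0" "\<delta> < 1/96" unfolding \<delta>_def using elt e1 by auto
  define L where "L = ln (1/\<epsilon>)"
  have lneps: "ln \<epsilon> = - L" unfolding L_def using e0 by (simp add: ln_div)
  have "ln \<epsilon> \<le> - \<delta>"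
  proof -
    have "ln (1 + (-\<delta>)) \<le> - \<delta>" by (rule ln_add_one_self_le_self2) (use d0 in auto)
    then show ?thesis unfolding \<delta>_def by simp
  qed
  then have Ld: "L \<ge> \<delta>" using lneps by linarith
  define S where "S = sqrt (real n) * ln (real n)"
  define c where "c = n div 2"
  define Bm where "Bm = real (n choose c)"
  have Bm: "Bm \<ge> N / (6 * sqrt (real n))" unfolding Bm_def c_def N_def using central_binom[of n] n2 by simp
  have sqn: "sqrt (real n) \<ge> 1" using n2 by simp
  obtain g where g: "submodular n g" "card {z \<in> Pow {..<n}. f z \<noteq> g z} \<le> card {z \<in> Pow {..<n}. card z \<noteq> c}"
    using construct_narrow[of n f c] by blast
  have cc: "card {z \<in> Pow {..<n}. card z = c} = n choose c"
  proof -
    have "card {z \<in> Pow {..<n}. card z = c} = (\<Sum>k\<in>{k. k \<le> n \<and> k = c}. n choose k)" by (rule card_levels)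
    also have "{k. k \<le> n \<and> k = c} = {c}" unfolding c_def by auto
    finally show ?thesis by simp
  qed
  have "card {z \<in> Pow {..<n}. card z = c} + card {z \<in> Pow {..<n}. card z \<noteq> c} = 2^n" by (rule card_Pow_split)
  then have "real (card {z \<in> Pow {..<n}. card z \<noteq> c}) = N - Bm"
    unfolding cc Bm_def N_def using arg_cong[of _ _ real] by (metis add_diff_cancel_left' of_nat_add of_nat_numeral of_nat_power)
  then have "\<epsilon> * N < N - Bm" using far_less[OF far g(1)] g(2) unfolding N_def
    by (smt (verit) of_nat_le_iff)
  then have "Bm < \<delta> * N" unfolding \<delta>_def by (simp add: algebra_simps)
  then have "N / (6 * sqrt (real n)) < \<delta> * N" using Bm by linarith
  then have d6: "\<delta> * (6 * sqrt (real n)) > 1" using N0 sqn by (simp add: field_simps)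
  have sq16: "sqrt (real n) > 16"
  proof (rule ccontr)
    assume "\<not> sqrt (real n) > 16"
    then have "\<delta> * (6 * sqrt (real n)) \<le> (1/96) * (6 * 16)" using d0 sqn by (intro mult_mono) auto
    then show False using d6 by simp
  qed
  define J where "J = nat \<lceil>24 * \<delta> * sqrt (real n)\<rceil>"
  have J1: "real J \<ge> 24 * \<delta> * sqrt (real n)" unfolding J_def by linarith
  have J2: "real J \<le> 24 * \<delta> * sqrt (real n) + 1"
  proof -
    have x0: "24 * \<delta> * sqrt (real n) \<ge> 0" using d0 sqn by simp
    then have "real J = of_int \<lceil>24 * \<delta> * sqrt (real n)\<rceil>" unfolding J_def by simp
    also have "\<dots> \<le> 24 * \<delta> * sqrt (real n) + 1" by (rule of_int_ceiling_le_add_one)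
    finally show ?thesis .
  qed
  have "24 * \<delta> * sqrt (real n) \<le> 24 * (1/96) * sqrt (real n)" using d0 sqn by (intro mult_right_mono) auto
  then have J3: "real J \<le> sqrt (real n) / 2" using J2 sq16 by linarith
  have J4: "4 * J^2 \<le> n"
  proof -
    have "real J ^ 2 \<le> (sqrt (real n) / 2)^2" using J3 by (intro power_mono) auto
    also have "\<dots> = real n / 4" by (simp add: power_divide)
    finally have "4 * real J ^ 2 \<le> real n" by simp
    then show ?thesis by (metis of_nat_le_iff of_nat_mult of_nat_numeral of_nat_power)
  qed
  have J5: "c + J \<le> n"
  proof -
    have "sqrt (real n) \<le> real n" using sqrt_le_self'[of "real n"] n2 by simp
    then have "real c + real J \<le> real n" unfolding c_def using J3 by linarith
    then show ?thesis by linarith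
  qed
  have n0: "n > 0" using n2 by simp
  have mass: "real (\<Sum>k\<in>{c..c+J}. n choose k) \<ge> real (J+1) * Bm / 2"
    unfolding Bm_def by (rule band_mass[OF n0 c_def J4 J5])
  have "real (J+1) * Bm / 2 \<ge> (24 * \<delta> * sqrt (real n)) * (N / (6 * sqrt (real n))) / 2"
    using J1 Bm d0 sqn N0 by (intro divide_right_mono mult_mono) auto
  also have "(24 * \<delta> * sqrt (real n)) * (N / (6 * sqrt (real n))) / 2 = 2 * \<delta> * N" using sqn by (simp add: field_simps)
  finally have mass2: "real (\<Sum>k\<in>{c..c+J}. n choose k) \<ge> 2 * \<delta> * N" using mass by linarith
  obtain g2 where g2: "submodular n g2"
    "card {z \<in> Pow {..<n}. f z \<noteq> g2 z} \<le> card {z \<in> Pow {..<n}. card z < c \<or> c + J < card z} + card (Vset n f c) * (n+1)^((c+J)-c)"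
    using construct[of n f c "c+J"] by blast
  have cin: "card {z \<in> Pow {..<n}. c \<le> card z \<and> card z \<le> c + J} = (\<Sum>k\<in>{c..c+J}. n choose k)"
  proof -
    have "card {z \<in> Pow {..<n}. c \<le> card z \<and> card z \<le> c + J} = (\<Sum>k\<in>{k. k \<le> n \<and> c \<le> k \<and> k \<le> c + J}. n choose k)"
      by (rule card_levels)
    also have "{k. k \<le> n \<and> c \<le> k \<and> k \<le> c + J} = {c..c+J}" using J5 by auto
    finally show ?thesis .
  qed
  have "card {z \<in> Pow {..<n}. c \<le> card z \<and> card z \<le> c + J} + card {z \<in> Pow {..<n}. \<not> (c \<le> card z \<and> card z \<le> c + J)} = 2^n"
    by (rule card_Pow_split)
  moreover have "{z \<in> Pow {..<n}. \<not> (c \<le> card z \<and> card z \<le> c + J)} = {z \<in> Pow {..<n}. card z < c \<or> c + J < card z}" by auto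
  ultimately have spl: "(\<Sum>k\<in>{c..c+J}. n choose k) + card {z \<in> Pow {..<n}. card z < c \<or> c + J < card z} = 2^n"
    unfolding cin by simp
  have "real (\<Sum>k\<in>{c..c+J}. n choose k) + real (card {z \<in> Pow {..<n}. card z < c \<or> c + J < card z}) = N"
    using arg_cong[OF spl, of real] unfolding N_def by simp
  then have "real (card {z \<in> Pow {..<n}. card z < c \<or> c + J < card z}) = N - real (\<Sum>k\<in>{c..c+J}. n choose k)"
    by linarith
  then have cOut: "real (card {z \<in> Pow {..<n}. card z < c \<or> c + J < card z}) \<le> N - 2 * \<delta> * N" using mass2 by linarith
  define V where "V = real (card (Vset n f 0))"
  have V0: "V \<ge> 0" unfolding V_def by simp
  define E where "E = real ((n+1)^J)"
  have E0: "E > 0" unfolding E_def by simp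
  have Va: "real (card (Vset n f c)) \<le> V" unfolding V_def using Vset_mono by simp
  have "\<epsilon> * N < real (card {z \<in> Pow {..<n}. card z < c \<or> c + J < card z}) + real (card (Vset n f c)) * E"
  proof -
    have "card {z \<in> Pow {..<n}. f z \<noteq> g2 z} \<le> card {z \<in> Pow {..<n}. card z < c \<or> c + J < card z} + card (Vset n f c) * (n+1)^J"
      using g2(2) by simp
    then have "real (card {z \<in> Pow {..<n}. f z \<noteq> g2 z}) \<le> real (card {z \<in> Pow {..<n}. card z < c \<or> c + J < card z} + card (Vset n f c) * (n+1)^J)"
      by (simp only: of_nat_le_iff)
    then have "real (card {z \<in> Pow {..<n}. f z \<noteq> g2 z}) \<le> real (card {z \<in> Pow {..<n}. card z < c \<or> c + J < card z}) + real (card (Vset n f c)) * E"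
      unfolding E_def by simp
    then show ?thesis using far_less[OF far g2(1)] unfolding N_def by linarith
  qed
  also have "real (card (Vset n f c)) * E \<le> V * E" using Va E0 by (intro mult_right_mono) auto
  finally have VE: "V * E > \<delta> * N" using cOut unfolding \<delta>_def by (simp add: algebra_simps)
  have p: "pviol n f \<ge> V / (N * real n ^ 2)" unfolding V_def N_def by (rule pviol_lower)
  define R where "R = (1/\<epsilon>) powr (2000 * sqrt n * ln n)"
  have R: "R = exp (2000 * S * L)" unfolding R_def S_def L_def using powr_exp[OF e0] by (simp add: mult_ac)
  have "ln (2::real) \<le> ln (real n)" using n2 by (subst ln_le_cancel_iff) auto
  then have ln2n: "ln (real n) \<ge> 1/2" using ln2(1) by linarith
  have n256: "real n \<ge> 256"
  proof -
    have "16^2 \<le> sqrt (real n) ^ 2" using sq16 by (intro power_mono) auto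
    then show ?thesis by simp
  qed
  have ln12: "ln (12::real) \<le> ln (real n)" using n256 by (subst ln_le_cancel_iff) auto
  have lnd: "ln \<delta> \<ge> - (ln 6 + ln (real n))"
  proof -
    have "1 / (6 * real n) \<le> \<delta>"
    proof -
      have "6 * sqrt (real n) \<le> 6 * real n" using sqrt_le_self'[of "real n"] n2 by simp
      then have "1 / (6 * real n) \<le> 1 / (6 * sqrt (real n))" using sqn by (intro divide_left_mono) auto
      also have "1 / (6 * sqrt (real n)) < \<delta>" using d6 sqn by (simp add: field_simps)
      finally show ?thesis by simp
    qed
    then have "ln (1 / (6 * real n)) \<le> ln \<delta>" using n2 d0 by (subst ln_le_cancel_iff) auto
    moreover have "ln (1 / (6 * real n)) = - (ln 6 + ln (real n))" using n2 by (simp add: ln_div ln_mult)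
    ultimately show ?thesis by simp
  qed
  have ln12eq: "ln (12::real) = ln 2 + ln 6"
  proof -
    have "ln ((2::real) * 6) = ln 2 + ln 6" by (rule ln_mult_pos) auto
    then show ?thesis by simp
  qed
  have JE: "real J * ln (real n + 1) \<le> 48 * \<delta> * S + 2 * ln (real n)"
  proof -
    have "real J * ln (real n + 1) \<le> (24 * \<delta> * sqrt (real n) + 1) * (2 * ln (real n))"
      using J2 ln_succ_le[OF n2] by (intro mult_mono) auto
    also have "\<dots> = 48 * \<delta> * S + 2 * ln (real n)" unfolding S_def by (simp add: algebra_simps)
    finally show ?thesis .
  qed
  have dS: "\<delta> * S \<ge> ln (real n) / 6"
  proof -
    have "\<delta> * sqrt (real n) \<ge> 1/6" using d6 by simp
    then have "(\<delta> * sqrt (real n)) * ln (real n) \<ge> (1/6) * ln (real n)" using ln2n by (intro mult_right_mono) auto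
    then show ?thesis unfolding S_def by (simp add: mult_ac)
  qed
  have SL: "S * L \<ge> S * \<delta>"
  proof -
    have "S \<ge> 0" unfolding S_def using ln2n by simp
    then show ?thesis using Ld by (intro mult_left_mono) auto
  qed
  have key: "ln 2 + 2 * ln (real n) + real J * ln (real n + 1) \<le> ln \<delta> + 2000 * S * L"
    using ln12 lnd ln12eq JE dS SL ln2n by (simp add: algebra_simps)
  have "2 * real n ^ 2 * E = exp (ln 2 + 2 * ln (real n) + real J * ln (real n + 1))"
  proof -
    have e2: "exp (2 * ln (real n)) = real n ^ 2" using exp_of_nat_mult[of 2 "ln (real n)"] n2 by simp
    show ?thesis unfolding E_def pow_exp exp_add e2 by simp
  qed
  also have "\<dots> \<le> exp (ln \<delta> + 2000 * S * L)" using key by simp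
  also have "\<dots> = \<delta> * R" unfolding R exp_add using d0 by simp
  finally have eR: "2 * real n ^ 2 * E \<le> \<delta> * R" .
  have nn: "real n ^ 2 > 0" using n2 by simp
  have R0: "R \<ge> 0" unfolding R by simp
  have "V * R \<ge> 2 * (N * real n ^ 2)"
  proof -
    have "\<delta> * N * R \<le> V * E * R" using VE R0 by (intro mult_right_mono) auto
    moreover have "2 * real n ^ 2 * E * N \<le> \<delta> * R * N" using eR N0 by (intro mult_right_mono) auto
    ultimately have "2 * (N * real n ^ 2) * E \<le> V * R * E" by (simp add: algebra_simps)
    then show ?thesis using E0 by (simp add: mult_le_cancel_right)
  qed
  then have "V / (N * real n ^ 2) * R \<ge> 2" using N0 nn by (simp add: field_simps)
  moreover have "pviol n f * R \<ge> V / (N * real n ^ 2) * R" using p R0 by (intro mult_right_mono) auto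
  ultimately show ?thesis unfolding R_def by linarith
qed



theorem corollary1:
  "\<exists>C>0. \<forall>n::nat. \<forall>\<epsilon>::real. \<forall>f::nat set \<Rightarrow> real. 0 < \<epsilon> \<longrightarrow>
     (let m = nat \<lceil>(1 / \<epsilon>) powr (C * sqrt (real n) * ln (real n))\<rceil> in
        (submodular n f \<longrightarrow> tester_rejects_prob n m f = 0) \<and>
        (eps_far_submodular n \<epsilon> f \<longrightarrow> tester_rejects_prob n m f > 2 / 3))"
proof (intro exI[of _ 2000] conjI allI impI)
  show "(0::real) < 2000" by simp
  fix n :: nat and \<epsilon> :: real and f :: "nat set \<Rightarrow> real"
  assume e0: "0 < \<epsilon>"
  define R where "R = (1 / \<epsilon>) powr (2000 * sqrt (real n) * ln (real n))"
  define m where "m = nat \<lceil>R\<rceil>"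
  have mR: "real m \<ge> R" unfolding m_def by linarith
  have part1: "submodular n f \<longrightarrow> tester_rejects_prob n m f = 0"
    using pviol_zero[of n f] tester_eq[of n m f] by simp
  have part2: "eps_far_submodular n \<epsilon> f \<longrightarrow> tester_rejects_prob n m f > 2 / 3"
  proof
    assume far: "eps_far_submodular n \<epsilon> f"
    have n2: "n \<ge> 2"
    proof (rule ccontr)
      assume "\<not> n \<ge> 2"
      then have "submodular n f" by (intro small_n_submodular) simp
      then have "\<epsilon> * 2^n < real (card {x \<in> Pow {..<n}. f x \<noteq> f x})" by (rule far_less[OF far])
      then have "\<epsilon> * 2^n < 0" by simp
      moreover have "\<epsilon> * 2^n > 0" using e0 by simp
      ultimately show False by linarith
    qed
    have pR: "pviol n f * R \<ge> 2"
    proof (cases "\<epsilon> \<le> 95/96")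
      case True then show ?thesis unfolding R_def using caseA[OF far e0 True n2] by simp
    next
      case False then show ?thesis unfolding R_def using caseB[OF far e0 _ n2] by simp
    qed
    have "pviol n f * R \<le> pviol n f * real m" using mR pviol_bounds(1) by (intro mult_left_mono) auto
    then have "pviol n f * real m \<ge> 2" using pR by linarith
    then show "tester_rejects_prob n m f > 2 / 3"
      unfolding tester_eq using reject_prob pviol_bounds by blast
  qed
  show "let m = nat \<lceil>(1 / \<epsilon>) powr (2000 * sqrt (real n) * ln (real n))\<rceil> in
        (submodular n f \<longrightarrow> tester_rejects_prob n m f = 0) \<and>
        (eps_far_submodular n \<epsilon> f \<longrightarrow> tester_rejects_prob n m f > 2 / 3)"
    using part1 part2 unfolding m_def R_def Let_def by simp
qed


end
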